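(* Consider the ring network, traffic model and shortest-path routing described in the context, and fix a wavelength $\lambda\in\{1,\ldots,\Lambda\}$. For every node $n\in\{0,\ldots,N-1\}$, \[ \mathbb{P}\big(\overset{\curvearrowright}{(n+1)}_{\lambda}\big)=\mathbb{P}\big(\overset{\curvearrowright}{n}_{\lambda}\big)+\mathbb{P}(S=n)-\mathbb{P}(\mathcal{G}_{\lambda}=n), \] where indices of segments are taken modulo $N$ (so $\overset{\curvearrowright}{0}_\lambda=\overset{\curvearrowright}{N}_\lambda$).
   Context: Network: a bidirectional ring with $N$ nodes labeled $1,\ldots,N$ in clockwise order; node labels are taken modulo $N$, so node $N$ is also called node $0$. There are $\Lambda$ wavelength channels $1,\ldots,\Lambda$ in each ring direction, and $\eta:=N/\Lambda$ is a positive integer. Node $n$ receives (is homed) on wavelength $\lambda$ iff $n\in\mathcal{M}_\lambda:=\{\lambda+k\Lambda: k=0,\ldots,\eta-1\}$. For $1\le n\le N$, $u_n$ denotes the clockwise ring segment from node $n-1$ to node $n$. Node $N$ is the hotspot. Traffic: each packet has a sender $S$ and a destination (fanout) set $\mathcal{F}\subset\{1,\ldots,N\}\setminus\{S\}$, generated as follows, with $\alpha,\beta,\gamma\ge 0$, $\alpha+\beta+\gamma=1$. With probability $\alpha$ (uniform traffic): $S$ is uniform on $\{1,\ldots,N\}$, a fanout $l\in\{1,\ldots,N-1\}$ is drawn from a distribution $(\mu_l)$, and $\mathcal{F}$ is uniform among $l$-subsets of $\{1,\ldots,N\}\setminus\{S\}$. With probability $\beta$ (hotspot destination traffic): $S$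 is uniform on $\{1,\ldots,N-1\}$, $l$ is drawn from $(\nu_l)$, and $\mathcal{F}=\mathcal{F}'\cup\{N\}$ with $\mathcal{F}'$ uniform among $(l-1)$-subsets of $\{1,\ldots,N-1\}\setminus\{S\}$. With probability $\gamma$ (hotspot source traffic): $S=N$, $l$ is drawn from $(\kappa_l)$, and $\mathcal{F}$ is uniform among $l$-subsets of $\{1,\ldots,N-1\}$. $\mathbb{P}$ denotes the probability measure of this model. Shortest-path routing on wavelength $\lambda$: let $\mathcal{F}_\lambda:=\mathcal{F}\cap\mathcal{M}_\lambda$ and $\mathcal{A}_\lambda:=\mathcal{F}_\lambda\cup\{S\}$, with $|\mathcal{F}_\lambda|=\ell$. The "gaps" are the $\ell+1$ clockwise arcs between cyclically consecutive nodes of $\mathcal{A}_\lambda$ (if $\mathcal{A}_\lambda=\{X_1<\dots<X_{\ell+1}\}$, their lengths are $X_1+N-X_{\ell+1}$ and $X_{i}-X_{i-1}$, $i=2,\ldots,\ell+1$). A largest gap is chosen, uniformly at random among ties; it is called the chosen largest gap $CLG_\lambda$, and $\mathcal{G}_\lambda\in\{0,\ldots,N-1\}$ denotes the node at which $CLG_\lambda$ starts (in the clockwise sense). The packet is sent on wavelength $\lambda$ from $S$ clockwise up to node $\mathcal{G}_\lambda$ and from $S$ counterclockwise up to the node ending $CLG_\lambda$, so that exactly the segments outside $CLG_\lambda$ are traversed (if $\mathcal{F}_\lambda=\emptyset$ nothing is sent on $\lambda$). The event $\overset{\curvearrowright}{n}_{\lambda}$ means that segment $u_n$ is traversed in the clockwise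 direction on wavelength $\lambda$, i.e., $u_n$ lies on the clockwise arc from $S$ to $\mathcal{G}_\lambda$. *)

theory Defs
  imports "HOL-Probability.Probability"
begin

text \<open>Nodes are labelled 1..N; node N is also node 0. Internally we reduce labels mod N
  to residues in {0..<N}.\<close>

definition homed :: "nat \<Rightarrow> nat \<Rightarrow> nat \<Rightarrow> nat set" where
  "homed N \<Lambda> w = {w + k * \<Lambda> | k. k < N div \<Lambda>}"

definition active :: "nat \<Rightarrow> nat \<Rightarrow> nat \<Rightarrow> nat \<Rightarrow> nat set \<Rightarrow> nat set" where
  "active N \<Lambda> w S F = (\<lambda>m. m mod N) ` ((F \<inter> homed N \<Lambda> w) \<union> {S})"

definition gaplen :: "nat \<Rightarrow> nat set \<Rightarrow> nat \<Rightarrow> nat" where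
  "gaplen N A x = (if A - {x} = {} then N else Min ((\<lambda>y. (y + N - x) mod N) ` (A - {x})))"

definition largest_gap_starts :: "nat \<Rightarrow> nat set \<Rightarrow> nat set" where
  "largest_gap_starts N A = {x \<in> A. \<forall>y\<in>A. gaplen N A y \<le> gaplen N A x}"

definition traffic :: "nat \<Rightarrow> real \<Rightarrow> real \<Rightarrow> real \<Rightarrow> nat pmf \<Rightarrow> nat pmf \<Rightarrow> nat pmf
    \<Rightarrow> (nat \<times> nat set) pmf" where
  "traffic N \<alpha> \<beta> \<gamma> \<mu> \<nu> \<kappa> =
     bind_pmf (pmf_of_list [(0::nat, \<alpha>), (1, \<beta>), (2, \<gamma>)]) (\<lambda>c.
       if c = 0 then
         bind_pmf (pmf_of_set {1..N}) (\<lambda>S. bind_pmf \<mu> (\<lambda>l.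
           bind_pmf (pmf_of_set {F. F \<subseteq> {1..N} - {S} \<and> card F = l}) (\<lambda>F. return_pmf (S, F))))
       else if c = 1 then
         bind_pmf (pmf_of_set {1..N-1}) (\<lambda>S. bind_pmf \<nu> (\<lambda>l.
           bind_pmf (pmf_of_set {F'. F' \<subseteq> {1..N-1} - {S} \<and> card F' = l - 1})
             (\<lambda>F'. return_pmf (S, F' \<union> {N}))))
       else
         bind_pmf \<kappa> (\<lambda>l.
           bind_pmf (pmf_of_set {F. F \<subseteq> {1..N-1} \<and> card F = l}) (\<lambda>F. return_pmf (N, F))))"

text \<open>Full model on wavelength lambda: outcomes (S, F, G) where G is the start node
  (in {0..<N}) of the chosen largest gap, chosen uniformly among ties.\<close>
definition model :: "nat \<Rightarrow> nat \<Rightarrow> nat \<Rightarrow> real \<Rightarrow> real \<Rightarrow> real \<Rightarrow> nat pmf \<Rightarrow> nat pmf \<Rightarrow> nat pmf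
    \<Rightarrow> (nat \<times> nat set \<times> nat) pmf" where
  "model N \<Lambda> w \<alpha> \<beta> \<gamma> \<mu> \<nu> \<kappa> =
     bind_pmf (traffic N \<alpha> \<beta> \<gamma> \<mu> \<nu> \<kappa>) (\<lambda>(S, F).
       bind_pmf (pmf_of_set (largest_gap_starts N (active N \<Lambda> w S F)))
         (\<lambda>G. return_pmf (S, F, G)))"

text \<open>Segment u_n (n taken mod N; u_0 = u_N) lies on the clockwise arc from S to G,
  i.e. it is traversed clockwise on wavelength lambda.\<close>
definition cw_seg :: "nat \<Rightarrow> nat \<Rightarrow> nat \<Rightarrow> nat \<Rightarrow> bool" where
  "cw_seg N n S G =
     (let j = n mod N; s = S mod N in
        1 \<le> (j + N - s) mod N \<and> (j + N - s) mod N \<le> (G + N - s) mod N)"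

end

theory Submission imports Defs begin
lemma md: fixes j N s :: nat assumes "j < N" "s < N" shows "(j + N - s) mod N = (if s \<le> j then j - s else j + N - s)"
proof (cases "s \<le> j")
  case True
  then have e: "j + N - s = (j - s) + N" by arith
  have "(j + N - s) mod N = ((j - s) + N) mod N" by (subst e) (rule refl)
  also have "\<dots> = (j - s) mod N" by simp
  also have "\<dots> = j - s" using assms by simp
  finally show ?thesis using True by simp
next
  case False then show ?thesis using assms by simp
qed

lemma key0: fixes n N G s :: nat assumes "n<N" "G<N" "s < N"
  shows "((1 \<le> ((n+1) mod N + N - s) mod N \<and> ((n+1) mod N + N - s) mod N \<le> (G + N - s) mod N) \<or> G = n)
   \<longleftrightarrow> ((1 \<le> (n + N - s) mod N \<and> (n + N - s) mod N \<le> (G + N - s) mod N) \<or> s = n)"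
proof -
  have a: "(n + N - s) mod N = (if s \<le> n then n - s else n + N - s)" using md assms by blast
  have b: "(G + N - s) mod N = (if s \<le> G then G - s else G + N - s)" using md assms by blast
  have c: "((n+1) mod N + N - s) mod N = (if n + 1 = N then (if s = 0 then 0 else N - s) else
      (if s \<le> n + 1 then n + 1 - s else n + 1 + N - s))"
  proof (cases "n+1 = N")
    case True
    then have "(n+1) mod N = 0" by simp
    then show ?thesis using True md[of 0 N s] assms by auto
  next
    case False
    then have "n+1 < N" using assms by simp
    then show ?thesis using False md[of "n+1" N s] assms by auto
  qed
  show ?thesis unfolding a b c using assms by auto
qed

lemma key: assumes "n<N" "G<N" shows "(cw_seg N (n+1) S G \<or> G = n) \<longleftrightarrow> (cw_seg N n S G \<or> S mod N = n)"
  using key0[OF assms, of "S mod N"] assms unfolding cw_seg_def Let_def by simp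
lemma disjAD: fixes n N S :: nat assumes "n<N" shows "\<not> cw_seg N (n+1) S n"
proof -
  have s: "S mod N < N" using assms by simp
  have a: "(n + N - S mod N) mod N = (if S mod N \<le> n then n - S mod N else n + N - S mod N)" using md assms s by blast
  have c: "((n+1) mod N + N - S mod N) mod N = (if n + 1 = N then (if S mod N = 0 then 0 else N - S mod N) else
      (if S mod N \<le> n + 1 then n + 1 - S mod N else n + 1 + N - S mod N))"
  proof (cases "n+1 = N")
    case True
    then have "(n+1) mod N = 0" by simp
    then show ?thesis using True md[of 0 N "S mod N"] assms s by auto
  next
    case False
    then have "n+1 < N" using assms by simp
    then show ?thesis using False md[of "n+1" N "S mod N"] assms s by auto
  qed
  have nn: "n mod N = n" using assms by simp
  show ?thesis unfolding cw_seg_def Let_def nn a c using assms s by auto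
qed

lemma disjBC: fixes n N S G :: nat assumes "n<N" "S mod N = n" shows "\<not> cw_seg N n S G"
  using assms unfolding cw_seg_def Let_def by simp

lemma homed_fin: "finite (homed N L w)"
proof -
  have "homed N L w = (\<lambda>k. w + k * L) ` {..<N div L}" unfolding homed_def by auto
  then show ?thesis by simp
qed

lemma active_fin: "finite (active N L w S F)"
  unfolding active_def using homed_fin by auto

lemma active_lt: "0 < N \<Longrightarrow> x \<in> active N L w S F \<Longrightarrow> x < N"
  unfolding active_def by auto

lemma lgs_ne: "largest_gap_starts N (active N L w S F) \<noteq> {}"
proof -
  let ?A = "active N L w S F"
  have fin: "finite ?A" by (rule active_fin)
  have ne: "?A \<noteq> {}" unfolding active_def by auto
  obtain x where x: "x \<in> ?A" "\<forall>y\<in>?A. gaplen N ?A y \<le> gaplen N ?A x"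
  proof -
    have "Max (gaplen N ?A ` ?A) \<in> gaplen N ?A ` ?A" using fin ne by (intro Max_in) auto
    then obtain x where "x \<in> ?A" "gaplen N ?A x = Max (gaplen N ?A ` ?A)" by force
    moreover have "\<forall>y\<in>?A. gaplen N ?A y \<le> Max (gaplen N ?A ` ?A)" using fin by auto
    ultimately show ?thesis using that by metis
  qed
  then show ?thesis unfolding largest_gap_starts_def by blast
qed

lemma supp: assumes "0 < N" "x \<in> set_pmf (model N L w a b c mu nu ka)" shows "snd (snd x) < N"
proof -
  from assms(2) obtain S F where "(S,F) \<in> set_pmf (traffic N a b c mu nu ka)"
     and G: "x \<in> set_pmf (bind_pmf (pmf_of_set (largest_gap_starts N (active N L w S F)))
         (\<lambda>G. return_pmf (S, F, G)))"
    unfolding model_def by auto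
  have fin: "finite (largest_gap_starts N (active N L w S F))"
    using active_fin unfolding largest_gap_starts_def by auto
  from G obtain G where "G \<in> largest_gap_starts N (active N L w S F)" "x = (S,F,G)"
    using fin lgs_ne by auto
  then show ?thesis using active_lt[OF assms(1)] unfolding largest_gap_starts_def by auto
qed
theorem proposition3p1:
  fixes N \<Lambda> w :: nat and \<alpha> \<beta> \<gamma> :: real and \<mu> \<nu> \<kappa> :: "nat pmf"
  assumes "0 < \<Lambda>" and "0 < N" and "\<Lambda> dvd N"
    and "w \<in> {1..\<Lambda>}"
    and "0 \<le> \<alpha>" and "0 \<le> \<beta>" and "0 \<le> \<gamma>" and "\<alpha> + \<beta> + \<gamma> = 1"
    and "set_pmf \<mu> \<subseteq> {1..N-1}" and "set_pmf \<nu> \<subseteq> {1..N-1}" and "set_pmf \<kappa> \<subseteq> {1..N-1}"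
    and "n < N"
  shows "measure_pmf.prob (model N \<Lambda> w \<alpha> \<beta> \<gamma> \<mu> \<nu> \<kappa>)
            {(S, F, G). cw_seg N (n + 1) S G}
       = measure_pmf.prob (model N \<Lambda> w \<alpha> \<beta> \<gamma> \<mu> \<nu> \<kappa>) {(S, F, G). cw_seg N n S G}
         + measure_pmf.prob (model N \<Lambda> w \<alpha> \<beta> \<gamma> \<mu> \<nu> \<kappa>) {(S, F, G). S mod N = n}
         - measure_pmf.prob (model N \<Lambda> w \<alpha> \<beta> \<gamma> \<mu> \<nu> \<kappa>) {(S, F, G). G = n}"
proof -
  let ?M = "model N \<Lambda> w \<alpha> \<beta> \<gamma> \<mu> \<nu> \<kappa>"
  let ?A = "{(S, F, G). cw_seg N (n + 1) S G}"
  let ?B = "{(S, F, G). cw_seg N n S G}"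
  let ?C = "{(S, F, G). S mod N = n}"
  let ?D = "{(S::nat, F::nat set, G). G = n}"
  have AD: "measure_pmf.prob ?M (?A \<union> ?D) = measure_pmf.prob ?M ?A + measure_pmf.prob ?M ?D"
    by (rule measure_pmf.finite_measure_Union) (use disjAD[OF assms(12)] in auto)
  have BC: "measure_pmf.prob ?M (?B \<union> ?C) = measure_pmf.prob ?M ?B + measure_pmf.prob ?M ?C"
    by (rule measure_pmf.finite_measure_Union) (use disjBC[OF assms(12)] in auto)
  have eq: "(?A \<union> ?D) \<inter> set_pmf ?M = (?B \<union> ?C) \<inter> set_pmf ?M"
  proof (intro set_eqI iffI)
    fix x assume x: "x \<in> (?A \<union> ?D) \<inter> set_pmf ?M"
    obtain S F G where xx: "x = (S,F,G)" by (cases x) auto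
    have "G < N" using supp[OF assms(2), of x] x xx by auto
    then show "x \<in> (?B \<union> ?C) \<inter> set_pmf ?M" using key[OF assms(12), of G S] x xx by auto
  next
    fix x assume x: "x \<in> (?B \<union> ?C) \<inter> set_pmf ?M"
    obtain S F G where xx: "x = (S,F,G)" by (cases x) auto
    have "G < N" using supp[OF assms(2), of x] x xx by auto
    then show "x \<in> (?A \<union> ?D) \<inter> set_pmf ?M" using key[OF assms(12), of G S] x xx by auto
  qed
  have "measure_pmf.prob ?M (?A \<union> ?D) = measure_pmf.prob ?M (?B \<union> ?C)"
    by (metis eq measure_Int_set_pmf)
  then show ?thesis using AD BC by simp
qed

end
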